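(* Let $\lambda>0$, $a>0$, $\Gamma\ge0$ be real numbers with $\lambda\ge6\max\{\Gamma,1/a\}$, and let $v\in L^1(\mathbb{R})$ satisfy $|v(\xi)|\le\Gamma e^{-a|\xi|}$ for all $\xi\in\mathbb{R}$. Then there exists $\psi\in L^1(\mathbb{R})$ with $\psi=R[\psi]$ (the $L^1$-limit of the iterates $\psi_0=v$, $\psi_{n+1}=R[\psi_n]$) such that $$|\psi(\xi)|\le2\Gamma\exp\!\left(-\left(a-\frac1\lambda\right)|\xi|\right)\quad\text{for all }\xi\in\mathbb{R}.$$
   Context: Fix an infinitely differentiable $b:\mathbb{R}\to[0,1]$ with $b(\xi)=1$ for $|\xi|\le\lambda$ and $b(\xi)=0$ for $|\xi|\ge\sqrt2\lambda$. Convolution is normalized: $f*g(\xi)=\frac1{2\pi}\int f(\eta)g(\xi-\eta)\,d\eta$; $f^{*m}$ is the $m$-fold convolution. For $f\in L^1$: $W_b[f](\xi)=f(\xi)\frac{b(\xi)}{4\lambda^2-\xi^2}$, $\widetilde W_b[f](\xi)=f(\xi)\frac{i\xi\,b(\xi)}{4\lambda^2-\xi^2}$, $\exp_2^*[f]=\sum_{m\ge2}\frac{f^{*m}}{m!}$, and $R[f]=\frac14\widetilde W_b[f]*\widetilde W_b[f]-4\lambda^2\exp_2^*[W_b[f]]+v$. *)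

theory Defs
  imports "HOL-Analysis.Analysis"
begin

text \<open>Functions on the real line are complex valued; L^1 = Lebesgue integrable on lborel.\<close>

definition smooth_fun :: "(real \<Rightarrow> real) \<Rightarrow> bool" where
  "smooth_fun b \<longleftrightarrow> (\<exists>D :: nat \<Rightarrow> real \<Rightarrow> real. D 0 = b \<and>
      (\<forall>n x. (D n has_real_derivative D (Suc n) x) (at x)))"

definition conv :: "(real \<Rightarrow> complex) \<Rightarrow> (real \<Rightarrow> complex) \<Rightarrow> real \<Rightarrow> complex" where
  "conv f g = (\<lambda>\<xi>. complex_of_real (1 / (2 * pi)) * (LINT \<eta>|lborel. f \<eta> * g (\<xi> - \<eta>)))"

text \<open>m-fold convolution power, m >= 1.\<close>
fun conv_pow :: "(real \<Rightarrow> complex) \<Rightarrow> nat \<Rightarrow> real \<Rightarrow> complex" where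
  "conv_pow f 0 = (\<lambda>_. 0)"
| "conv_pow f (Suc 0) = f"
| "conv_pow f (Suc (Suc m)) = conv f (conv_pow f (Suc m))"

definition W_b :: "(real \<Rightarrow> real) \<Rightarrow> real \<Rightarrow> (real \<Rightarrow> complex) \<Rightarrow> real \<Rightarrow> complex" where
  "W_b b lam f = (\<lambda>\<xi>. f \<xi> * complex_of_real (b \<xi> / (4 * lam\<^sup>2 - \<xi>\<^sup>2)))"

definition Wt_b :: "(real \<Rightarrow> real) \<Rightarrow> real \<Rightarrow> (real \<Rightarrow> complex) \<Rightarrow> real \<Rightarrow> complex" where
  "Wt_b b lam f = (\<lambda>\<xi>. f \<xi> * (\<i> * complex_of_real (\<xi> * b \<xi>) / complex_of_real (4 * lam\<^sup>2 - \<xi>\<^sup>2)))"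

definition exp2_star :: "(real \<Rightarrow> complex) \<Rightarrow> real \<Rightarrow> complex" where
  "exp2_star f = (\<lambda>\<xi>. \<Sum>m. conv_pow f (m + 2) \<xi> / of_real (fact (m + 2)))"

definition R_map :: "(real \<Rightarrow> real) \<Rightarrow> real \<Rightarrow> (real \<Rightarrow> complex) \<Rightarrow> (real \<Rightarrow> complex) \<Rightarrow> real \<Rightarrow> complex" where
  "R_map b lam v f = (\<lambda>\<xi>. (1/4) * conv (Wt_b b lam f) (Wt_b b lam f) \<xi>
       - complex_of_real (4 * lam\<^sup>2) * exp2_star (W_b b lam f) \<xi> + v \<xi>)"

end

theory Submission
  imports Defs "HOL-Probability.Distributions"
begin


lemma integrable_exp_half:
  "integrable lborel (\<lambda>x::real. exp (-x) * indicator {0..} x)"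
proof -
  have "(\<integral>\<^sup>+x. ennreal (exp (-x) * indicator {0..} x) \<partial>lborel) = 1"
  proof -
    have "(\<integral>\<^sup>+x. ennreal (exp (-x) * indicator {0..} x) \<partial>lborel)
       = (\<integral>\<^sup>+x. ennreal (x^0 * exp (-x)) * indicator {0..} x \<partial>lborel)"
      by (intro nn_integral_cong) (auto simp: indicator_def)
    then show ?thesis using nn_intergal_power_times_exp_Ici[of 0] by simp
  qed
  then show ?thesis
    by (intro integrableI_nn_integral_finite[where x=1]) (auto simp: indicator_def)
qed

lemma integrable_w:
  fixes a :: real assumes "a > 0"
  shows "integrable lborel (\<lambda>x. exp (- a * \<bar>x\<bar>))"
proof -
  let ?h = "\<lambda>x::real. exp (-x) * indicator {0..} x"
  have i1: "integrable lborel (\<lambda>x. ?h (0 + a * x))"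
    using integrable_exp_half lborel_integrable_real_affine_iff[of a ?h 0] assms by simp
  have i2: "integrable lborel (\<lambda>x. ?h (0 + (-a) * x))"
    using integrable_exp_half lborel_integrable_real_affine_iff[of "-a" ?h 0] assms by simp
  have i: "integrable lborel (\<lambda>x. ?h (0 + a * x) + ?h (0 + (-a) * x))"
    using i1 i2 by simp
  show ?thesis
  proof (rule Bochner_Integration.integrable_bound[OF i])
    show "(\<lambda>x. exp (- a * \<bar>x\<bar>)) \<in> borel_measurable lborel" by measurable
    show "AE x in lborel. norm (exp (- a * \<bar>x\<bar>)) \<le> norm (?h (0 + a * x) + ?h (0 + (-a) * x))"
    proof (rule AE_I2)
      fix x :: real
      show "norm (exp (- a * \<bar>x\<bar>)) \<le> norm (?h (0 + a * x) + ?h (0 + (-a) * x))"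
        using assms by (cases "x \<ge> 0") (auto simp: indicator_def zero_le_mult_iff abs_if mult_le_0_iff)
    qed
  qed
qed



definition wt :: "real \<Rightarrow> real \<Rightarrow> real" where "wt a x = exp (- a * \<bar>x\<bar>)"

lemma wt_nn[simp]: "0 \<le> wt a x" unfolding wt_def by simp

lemma wt_pos: "wt a x > 0" by (simp add: wt_def)

lemma wt_tri: "a \<ge> 0 \<Longrightarrow> wt a y * wt a (x - y) \<le> wt a x"
proof -
  assume a: "a \<ge> 0"
  have "\<bar>x\<bar> \<le> \<bar>y\<bar> + \<bar>x - y\<bar>" by linarith
  then have "a * \<bar>x\<bar> \<le> a * (\<bar>y\<bar> + \<bar>x - y\<bar>)" using a by (rule mult_left_mono)
  then show ?thesis unfolding wt_def exp_add[symmetric] by (simp add: algebra_simps)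
qed

lemma integrable_ind_const:
  fixes K L :: real
  shows "integrable lborel (\<lambda>y. K * indicator {-L..L} y)"
  by (intro integrable_mult_right integrable_real_indicator) (auto simp: emeasure_lborel_Icc_eq)

lemma integral_ind_const:
  fixes K L :: real assumes "L \<ge> 0"
  shows "(LINT y|lborel. K * indicator {-L..L} y) = K * (2 * L)"
  using assms by (simp add: measure_lborel_Icc)

lemma conv_integrable:
  fixes f g :: "real \<Rightarrow> complex"
  assumes a: "a \<ge> 0" and f[measurable]: "f \<in> borel_measurable borel"
    and g[measurable]: "g \<in> borel_measurable borel"
    and fb: "\<forall>x. cmod (f x) \<le> A * wt a x" and gb: "\<forall>x. cmod (g x) \<le> B * wt a x"
    and fs: "\<forall>x. \<bar>x\<bar> > L \<longrightarrow> f x = 0" and AB: "A \<ge> 0" "B \<ge> 0"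
  shows "integrable lborel (\<lambda>y. f y * g (x - y))"
proof (rule Bochner_Integration.integrable_bound[OF integrable_ind_const[of "A * B * wt a x" L]])
  show "(\<lambda>y. f y * g (x - y)) \<in> borel_measurable lborel" by measurable
  show "AE y in lborel. norm (f y * g (x - y)) \<le> norm (A * B * wt a x * indicator {- L..L} y)"
  proof (rule AE_I2)
    fix y
    show "norm (f y * g (x - y)) \<le> norm (A * B * wt a x * indicator {- L..L} y)"
    proof (cases "\<bar>y\<bar> > L")
      case True then show ?thesis using fs by simp
    next
      case False
      have "norm (f y * g (x - y)) \<le> (A * wt a y) * (B * wt a (x - y))"
        unfolding norm_mult by (intro mult_mono fb[rule_format] gb[rule_format]) (use AB in \<open>auto intro: mult_nonneg_nonneg\<close>)
      also have "\<dots> = A * B * (wt a y * wt a (x - y))" by simp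
      also have "\<dots> \<le> A * B * wt a x" using wt_tri[OF a] AB by (intro mult_left_mono) auto
      moreover have "indicator {-L..L} y = (1::real)" using False by (auto simp: indicator_def abs_less_iff)
      ultimately show ?thesis using AB by simp
    qed
  qed
qed

lemma conv_diff_bound:
  fixes f1 f2 g1 g2 :: "real \<Rightarrow> complex"
  assumes a: "a \<ge> 0" and L: "L \<ge> 0"
    and m[measurable]: "f1 \<in> borel_measurable borel" "f2 \<in> borel_measurable borel"
      "g1 \<in> borel_measurable borel" "g2 \<in> borel_measurable borel"
    and f1b: "\<forall>x. cmod (f1 x) \<le> A1 * wt a x" and f2b: "\<forall>x. cmod (f2 x) \<le> A2 * wt a x"
    and g1b: "\<forall>x. cmod (g1 x) \<le> B1 * wt a x" and g2b: "\<forall>x. cmod (g2 x) \<le> B2 * wt a x"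
    and f1s: "\<forall>x. \<bar>x\<bar> > L \<longrightarrow> f1 x = 0" and f2s: "\<forall>x. \<bar>x\<bar> > L \<longrightarrow> f2 x = 0"
    and fd: "\<forall>x. cmod (f1 x - f2 x) \<le> D * wt a x" and gd: "\<forall>x. cmod (g1 x - g2 x) \<le> E * wt a x"
    and nn: "A1 \<ge> 0" "A2 \<ge> 0" "B1 \<ge> 0" "B2 \<ge> 0" "D \<ge> 0" "E \<ge> 0"
  shows "cmod (conv f1 g1 x - conv f2 g2 x) \<le> (D * B1 + A2 * E) * (L / pi) * wt a x"
proof -
  have i1: "integrable lborel (\<lambda>y. f1 y * g1 (x - y))"
    by (rule conv_integrable[OF a m(1) m(3) f1b g1b f1s nn(1) nn(3)])
  have i2: "integrable lborel (\<lambda>y. f2 y * g2 (x - y))"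
    by (rule conv_integrable[OF a m(2) m(4) f2b g2b f2s nn(2) nn(4)])
  let ?K = "(D * B1 + A2 * E) * wt a x"
  have pw: "norm (f1 y * g1 (x - y) - f2 y * g2 (x - y)) \<le> ?K * indicator {-L..L} y" for y
  proof (cases "\<bar>y\<bar> > L")
    case True then show ?thesis using f1s f2s nn by simp
  next
    case False
    have eq: "f1 y * g1 (x - y) - f2 y * g2 (x - y) = (f1 y - f2 y) * g1 (x - y) + f2 y * (g1 (x - y) - g2 (x - y))"
      by (simp add: algebra_simps)
    have "norm (f1 y * g1 (x - y) - f2 y * g2 (x - y)) \<le> norm ((f1 y - f2 y) * g1 (x - y)) + norm (f2 y * (g1 (x - y) - g2 (x - y)))"
      unfolding eq by (rule norm_triangle_ineq)
    also have "\<dots> \<le> (D * wt a y) * (B1 * wt a (x - y)) + (A2 * wt a y) * (E * wt a (x - y))"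
      unfolding norm_mult
      by (intro add_mono mult_mono fd[rule_format] g1b[rule_format] f2b[rule_format] gd[rule_format])
         (use nn in \<open>auto intro: mult_nonneg_nonneg\<close>)
    also have "\<dots> = (D * B1 + A2 * E) * (wt a y * wt a (x - y))" by (simp add: algebra_simps)
    also have "\<dots> \<le> ?K" using wt_tri[OF a] nn by (intro mult_left_mono) auto
    moreover have "indicator {-L..L} y = (1::real)" using False by (auto simp: indicator_def abs_less_iff)
    ultimately show ?thesis by simp
  qed
  have "conv f1 g1 x - conv f2 g2 x = complex_of_real (1 / (2 * pi)) *
      (LINT y|lborel. f1 y * g1 (x - y) - f2 y * g2 (x - y))"
    unfolding conv_def by (simp add: Bochner_Integration.integral_diff[OF i1 i2] algebra_simps)
  then have "cmod (conv f1 g1 x - conv f2 g2 x) = (1 / (2 * pi)) * cmod (LINT y|lborel. f1 y * g1 (x - y) - f2 y * g2 (x - y))"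
    by (simp add: norm_divide norm_mult)
  also have "\<dots> \<le> (1 / (2 * pi)) * (LINT y|lborel. ?K * indicator {-L..L} y)"
  proof (intro mult_left_mono)
    show "cmod (LINT y|lborel. f1 y * g1 (x - y) - f2 y * g2 (x - y)) \<le> (LINT y|lborel. ?K * indicator {-L..L} y)"
      by (rule Bochner_Integration.integral_norm_bound_integral[OF Bochner_Integration.integrable_diff[OF i1 i2] integrable_ind_const pw])
  qed simp
  also have "\<dots> = (D * B1 + A2 * E) * (L / pi) * wt a x"
    using L by (simp add: integral_ind_const field_simps)
  finally show ?thesis .
qed



lemma conv_meas:
  assumes [measurable]: "f \<in> borel_measurable borel" "g \<in> borel_measurable borel"
  shows "conv f g \<in> borel_measurable borel"
  unfolding conv_def by measurable

lemma conv_pow_bound: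
  fixes f :: "real \<Rightarrow> complex"
  assumes a: "a \<ge> 0" and L: "L \<ge> 0" and A: "A \<ge> 0"
    and fm: "f \<in> borel_measurable borel" and fb: "\<forall>x. cmod (f x) \<le> A * wt a x"
    and fs: "\<forall>x. \<bar>x\<bar> > L \<longrightarrow> f x = 0"
  shows "conv_pow f (Suc m) \<in> borel_measurable borel \<and>
    (\<forall>x. cmod (conv_pow f (Suc m) x) \<le> A ^ Suc m * (L / pi) ^ m * wt a x)"
proof (induction m)
  case 0
  then show ?case using fm fb by simp
next
  case (Suc m)
  let ?F = "conv_pow f (Suc m)"
  have Fm: "?F \<in> borel_measurable borel" and Fb: "\<forall>x. cmod (?F x) \<le> (A ^ Suc m * (L / pi) ^ m) * wt a x"
    using Suc by auto
  have nn: "A ^ Suc m * (L / pi) ^ m \<ge> 0" using A L by simp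
  have "cmod (conv f ?F x - conv (\<lambda>_. 0) (\<lambda>_. 0) x) \<le> (A * (A ^ Suc m * (L / pi) ^ m) + 0 * (A ^ Suc m * (L / pi) ^ m)) * (L / pi) * wt a x" for x
    by (rule conv_diff_bound[OF a L fm _ Fm _ fb _ Fb _ fs _ _ _ A _ nn _ _ nn]) (use fb Fb A in auto)
  moreover have "conv (\<lambda>_. 0) (\<lambda>_. 0) x = 0" for x by (simp add: conv_def)
  ultimately show ?case using conv_meas[OF fm Fm]
    by (simp add: algebra_simps)
qed

lemma conv_pow_diff:
  fixes f g :: "real \<Rightarrow> complex"
  assumes a: "a \<ge> 0" and L: "L \<ge> 0" and A: "A \<ge> 0" and D: "D \<ge> 0"
    and fm: "f \<in> borel_measurable borel" and fb: "\<forall>x. cmod (f x) \<le> A * wt a x"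
    and fs: "\<forall>x. \<bar>x\<bar> > L \<longrightarrow> f x = 0"
    and gm: "g \<in> borel_measurable borel" and gb: "\<forall>x. cmod (g x) \<le> A * wt a x"
    and gs: "\<forall>x. \<bar>x\<bar> > L \<longrightarrow> g x = 0"
    and fg: "\<forall>x. cmod (f x - g x) \<le> D * wt a x"
  shows "\<forall>x. cmod (conv_pow f (Suc m) x - conv_pow g (Suc m) x) \<le> real (Suc m) * D * A ^ m * (L / pi) ^ m * wt a x"
proof (induction m)
  case 0
  then show ?case using fg by simp
next
  case (Suc m)
  let ?F = "conv_pow f (Suc m)" and ?G = "conv_pow g (Suc m)"
  note F = conv_pow_bound[OF a L A fm fb fs, of m] and G = conv_pow_bound[OF a L A gm gb gs, of m]
  have nn: "A ^ Suc m * (L / pi) ^ m \<ge> 0" using A L by simp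
  have nn2: "real (Suc m) * D * A ^ m * (L / pi) ^ m \<ge> 0" using A L D by simp
  have "cmod (conv f ?F x - conv g ?G x) \<le> (D * (A ^ Suc m * (L / pi) ^ m) + A * (real (Suc m) * D * A ^ m * (L / pi) ^ m)) * (L / pi) * wt a x" for x
    by (rule conv_diff_bound[OF a L fm gm _ _ fb gb _ _ fs gs fg _ A A nn nn D nn2]) (use F G Suc in auto)
  then show ?case
    by (simp add: algebra_simps)
qed



lemma geo_sum_bound:
  fixes c :: "nat \<Rightarrow> complex"
  assumes "\<forall>m. cmod (c m) \<le> K * (1/2) ^ m"
  shows "summable c \<and> cmod (suminf c) \<le> 2 * K"
proof -
  have sg: "summable (\<lambda>m. K * (1/2::real) ^ m)"
    by (intro summable_mult summable_geometric) simp
  have sn: "summable (\<lambda>m. norm (c m))"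
    by (rule summable_comparison_test[OF _ sg]) (use assms in auto)
  have "summable c" by (rule summable_norm_cancel[OF sn])
  moreover have "cmod (suminf c) \<le> (\<Sum>m. norm (c m))" by (rule summable_norm[OF sn])
  moreover have "(\<Sum>m. norm (c m)) \<le> (\<Sum>m. K * (1/2::real) ^ m)"
    by (rule suminf_le[OF _ sn sg]) (use assms in auto)
  moreover have "(\<Sum>m. K * (1/2::real) ^ m) = 2 * K"
    by (simp add: suminf_mult suminf_geometric)
  ultimately show ?thesis by simp
qed

lemma fact_real_ge: "real n \<le> fact n"
  using fact_ge_self[of n] by (metis of_nat_fact of_nat_le_iff)

lemma pow_half: "0 \<le> t \<Longrightarrow> t \<le> 1/2 \<Longrightarrow> t ^ Suc m \<le> t * (1/2::real) ^ m"
  by (simp add: mult_left_mono power_mono)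

lemma exp2_terms:
  fixes f :: "real \<Rightarrow> complex"
  assumes a: "a \<ge> 0" and L: "L \<ge> 0" and A: "A \<ge> 0"
    and fm: "f \<in> borel_measurable borel" and fb: "\<forall>x. cmod (f x) \<le> A * wt a x"
    and fs: "\<forall>x. \<bar>x\<bar> > L \<longrightarrow> f x = 0" and t: "A * L / pi \<le> 1/2"
  shows "\<forall>m. cmod (conv_pow f (m + 2) x / of_real (fact (m + 2))) \<le> (A * (A * L / pi) * wt a x / 2) * (1/2) ^ m"
proof
  let ?t = "A * L / pi"
  have t0: "?t \<ge> 0" using A L by simp
  fix m
  have f2: "fact (m + 2) \<ge> (2::real)"
  proof -
    have "real (m+2) \<le> fact (m+2)" by (rule fact_real_ge)
    moreover have "real (m+2) \<ge> 2" by simp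
    ultimately show ?thesis by linarith
  qed
  have "cmod (conv_pow f (Suc (Suc m)) x) \<le> A ^ Suc (Suc m) * (L / pi) ^ Suc m * wt a x"
    using conv_pow_bound[OF a L A fm fb fs, of "Suc m"] by blast
  also have "\<dots> = A * ?t ^ Suc m * wt a x" by (simp add: power_mult_distrib field_simps)
  also have "\<dots> \<le> A * (?t * (1/2) ^ m) * wt a x"
    using pow_half[OF t0 t, of m] A by (intro mult_right_mono mult_left_mono) auto
  finally have 1: "cmod (conv_pow f (m + 2) x) \<le> A * (?t * (1/2) ^ m) * wt a x" by simp
  have "cmod (conv_pow f (m + 2) x / of_real (fact (m + 2))) = cmod (conv_pow f (m + 2) x) / fact (m + 2)"
    by (simp only: norm_divide norm_of_real) simp
  also have "\<dots> \<le> (A * (?t * (1/2) ^ m) * wt a x) / 2"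
  proof -
    have p: "0 \<le> ?t * (1/2) ^ m" using t0 by (intro mult_nonneg_nonneg) auto
    have nn: "0 \<le> A * (?t * (1/2) ^ m) * wt a x"
      by (rule mult_nonneg_nonneg[OF mult_nonneg_nonneg[OF A p] wt_nn])
    show ?thesis by (rule frac_le[OF nn 1 _ f2]) simp
  qed
  also have "(A * (?t * (1/2) ^ m) * wt a x) / 2 = (A * ?t * wt a x / 2) * (1/2) ^ m" by (simp add: ac_simps)
  finally show "cmod (conv_pow f (m + 2) x / of_real (fact (m + 2))) \<le> (A * ?t * wt a x / 2) * (1/2) ^ m" .
qed

lemma exp2_bound:
  fixes f :: "real \<Rightarrow> complex"
  assumes a: "a \<ge> 0" and L: "L \<ge> 0" and A: "A \<ge> 0"
    and fm: "f \<in> borel_measurable borel" and fb: "\<forall>x. cmod (f x) \<le> A * wt a x"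
    and fs: "\<forall>x. \<bar>x\<bar> > L \<longrightarrow> f x = 0" and t: "A * L / pi \<le> 1/2"
  shows "exp2_star f \<in> borel_measurable borel \<and>
    (\<forall>x. cmod (exp2_star f x) \<le> A * (A * L / pi) * wt a x)"
proof -
  let ?t = "A * L / pi"
  have t0: "?t \<ge> 0" using A L by simp
  define c where "c x m = conv_pow f (m + 2) x / of_real (fact (m + 2))" for x m
  have cb: "\<forall>m. cmod (c x m) \<le> (A * ?t * wt a x / 2) * (1/2) ^ m" for x
    unfolding c_def by (rule exp2_terms[OF a L A fm fb fs t])
  have sb: "summable (c x) \<and> cmod (suminf (c x)) \<le> 2 * (A * ?t * wt a x / 2)" for x
    by (rule geo_sum_bound[OF cb])
  have e: "exp2_star f x = suminf (c x)" for x unfolding exp2_star_def c_def by simp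
  have cm: "(\<lambda>x. c x m) \<in> borel_measurable borel" for m
  proof -
    have "conv_pow f (Suc (Suc m)) \<in> borel_measurable borel"
      using conv_pow_bound[OF a L A fm fb fs, of "Suc m"] by blast
    then show ?thesis unfolding c_def by simp
  qed
  have "exp2_star f \<in> borel_measurable borel"
  proof (rule borel_measurable_LIMSEQ_metric[where f="\<lambda>n x. \<Sum>m<n. c x m"])
    show "(\<lambda>x. \<Sum>m<n. c x m) \<in> borel_measurable borel" for n using cm by measurable
    show "(\<lambda>n. \<Sum>m<n. c x m) \<longlonglongrightarrow> exp2_star f x" if "x \<in> space borel" for x
      unfolding e using sb[of x] summable_LIMSEQ by blast
  qed
  then show ?thesis using sb e by simp
qed

lemma exp2_diff:
  fixes f g :: "real \<Rightarrow> complex"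
  assumes a: "a \<ge> 0" and L: "L \<ge> 0" and A: "A \<ge> 0" and D: "D \<ge> 0"
    and fm: "f \<in> borel_measurable borel" and fb: "\<forall>x. cmod (f x) \<le> A * wt a x"
    and fs: "\<forall>x. \<bar>x\<bar> > L \<longrightarrow> f x = 0"
    and gm: "g \<in> borel_measurable borel" and gb: "\<forall>x. cmod (g x) \<le> A * wt a x"
    and gs: "\<forall>x. \<bar>x\<bar> > L \<longrightarrow> g x = 0"
    and fg: "\<forall>x. cmod (f x - g x) \<le> D * wt a x" and t: "A * L / pi \<le> 1/2"
  shows "cmod (exp2_star f x - exp2_star g x) \<le> 2 * D * (A * L / pi) * wt a x"
proof -
  let ?t = "A * L / pi"
  have t0: "?t \<ge> 0" using A L by simp
  define cf where "cf m = conv_pow f (m + 2) x / of_real (fact (m + 2))" for m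
  define cg where "cg m = conv_pow g (m + 2) x / of_real (fact (m + 2))" for m
  have cd: "\<forall>m. cmod (cf m - cg m) \<le> (D * ?t * wt a x) * (1/2) ^ m"
  proof
    fix m
    have f2: "fact (m + 2) \<ge> real (m + 2)" by (rule fact_real_ge)
    have "cmod (conv_pow f (Suc (Suc m)) x - conv_pow g (Suc (Suc m)) x)
        \<le> real (Suc (Suc m)) * D * A ^ Suc m * (L / pi) ^ Suc m * wt a x"
      using conv_pow_diff[OF a L A D fm fb fs gm gb gs fg, of "Suc m"] by blast
    also have "\<dots> = real (m + 2) * (D * ?t ^ Suc m * wt a x)"
      by (simp add: power_mult_distrib field_simps)
    finally have 1: "cmod (conv_pow f (m + 2) x - conv_pow g (m + 2) x) \<le> real (m + 2) * (D * ?t ^ Suc m * wt a x)"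
      by simp
    have "cf m - cg m = (conv_pow f (m + 2) x - conv_pow g (m + 2) x) / of_real (fact (m + 2))"
      unfolding cf_def cg_def by (simp add: diff_divide_distrib)
    then have "cmod (cf m - cg m) = cmod (conv_pow f (m + 2) x - conv_pow g (m + 2) x) / fact (m + 2)"
      by (simp only: norm_divide norm_of_real) simp
    also have "\<dots> \<le> real (m + 2) * (D * ?t ^ Suc m * wt a x) / real (m + 2)"
    proof -
      have p: "0 \<le> ?t ^ Suc m" by (rule zero_le_power[OF t0])
      have nn: "0 \<le> real (m + 2) * (D * ?t ^ Suc m * wt a x)"
        by (rule mult_nonneg_nonneg[OF _ mult_nonneg_nonneg[OF mult_nonneg_nonneg[OF D p] wt_nn]]) simp
      have w: "0 < real (m + 2)" by simp
      show ?thesis by (rule frac_le[OF nn 1 w f2])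
    qed
    also have "\<dots> = D * ?t ^ Suc m * wt a x" by simp
    also have "\<dots> \<le> D * (?t * (1/2) ^ m) * wt a x"
      using pow_half[OF t0 t, of m] D by (intro mult_right_mono mult_left_mono) auto
    finally show "cmod (cf m - cg m) \<le> (D * ?t * wt a x) * (1/2) ^ m" by (simp add: ac_simps)
  qed
  have cfb: "\<forall>m. cmod (cf m) \<le> (A * ?t * wt a x / 2) * (1/2) ^ m"
    unfolding cf_def by (rule exp2_terms[OF a L A fm fb fs t])
  have cgb: "\<forall>m. cmod (cg m) \<le> (A * ?t * wt a x / 2) * (1/2) ^ m"
    unfolding cg_def by (rule exp2_terms[OF a L A gm gb gs t])
  have sf: "summable cf" using geo_sum_bound[OF cfb] by blast
  have sg: "summable cg" using geo_sum_bound[OF cgb] by blast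
  have "exp2_star f x - exp2_star g x = suminf cf - suminf cg"
    unfolding exp2_star_def cf_def cg_def by simp
  also have "\<dots> = (\<Sum>m. cf m - cg m)" using suminf_diff[OF sf sg] by simp
  finally have "cmod (exp2_star f x - exp2_star g x) = cmod (\<Sum>m. cf m - cg m)" by simp
  also have "\<dots> \<le> 2 * (D * ?t * wt a x)" using geo_sum_bound[OF cd] by blast
  finally show ?thesis by simp
qed



lemma conv_bound:
  fixes f g :: "real \<Rightarrow> complex"
  assumes a: "a \<ge> 0" and L: "L \<ge> 0"
    and fm: "f \<in> borel_measurable borel" and gm: "g \<in> borel_measurable borel"
    and fb: "\<forall>x. cmod (f x) \<le> A * wt a x" and gb: "\<forall>x. cmod (g x) \<le> B * wt a x"
    and fs: "\<forall>x. \<bar>x\<bar> > L \<longrightarrow> f x = 0" and A: "A \<ge> 0" and B: "B \<ge> 0"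
  shows "cmod (conv f g x) \<le> A * B * (L / pi) * wt a x"
proof -
  have z: "(\<lambda>_::real. 0::complex) \<in> borel_measurable borel" by simp
  have "cmod (conv f g x - conv (\<lambda>_. 0) (\<lambda>_. 0) x) \<le> (A * B + 0 * B) * (L / pi) * wt a x"
    by (rule conv_diff_bound[OF a L fm z gm z fb _ gb _ fs _ _ _ A _ B _ A B]) (use fb gb in auto)
  moreover have "conv (\<lambda>_. 0) (\<lambda>_. 0) x = 0" by (simp add: conv_def)
  ultimately show ?thesis by simp
qed

context
  fixes lam :: real and b :: "real \<Rightarrow> real"
  assumes lam: "lam > 0" and bm: "b \<in> borel_measurable borel"
    and hb: "\<forall>\<xi>. 0 \<le> b \<xi> \<and> b \<xi> \<le> 1"
    and hs: "\<forall>\<xi>. \<bar>\<xi>\<bar> \<ge> sqrt 2 * lam \<longrightarrow> b \<xi> = 0"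
begin

lemma b_supp: "b \<xi> \<noteq> 0 \<Longrightarrow> \<xi>\<^sup>2 < 2 * lam\<^sup>2"
proof -
  assume "b \<xi> \<noteq> 0"
  then have "\<bar>\<xi>\<bar> < sqrt 2 * lam" using hs by force
  then have "\<bar>\<xi>\<bar>\<^sup>2 < (sqrt 2 * lam)\<^sup>2" by (intro power_strict_mono) auto
  then show ?thesis by (simp add: power_mult_distrib)
qed

lemma b_supp2: "\<bar>\<xi>\<bar> > 2 * lam \<Longrightarrow> b \<xi> = 0"
proof (rule ccontr)
  assume "\<bar>\<xi>\<bar> > 2 * lam" "b \<xi> \<noteq> 0"
  then have "\<bar>\<xi>\<bar>\<^sup>2 > (2 * lam)\<^sup>2" using lam by (intro power_strict_mono) auto
  moreover have "(2 * lam)\<^sup>2 = 4 * lam\<^sup>2" by (simp add: power_mult_distrib)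
  moreover have "\<bar>\<xi>\<bar>\<^sup>2 = \<xi>\<^sup>2" by simp
  ultimately show False using b_supp[OF \<open>b \<xi> \<noteq> 0\<close>] zero_le_power2[of lam] by linarith
qed

lemma fac_W: "cmod (complex_of_real (b \<xi> / (4 * lam\<^sup>2 - \<xi>\<^sup>2))) \<le> 1 / (2 * lam\<^sup>2)"
proof (cases "b \<xi> = 0")
  case True then show ?thesis by simp
next
  case False
  have s: "\<xi>\<^sup>2 < 2 * lam\<^sup>2" by (rule b_supp[OF False])
  have pos: "4 * lam\<^sup>2 - \<xi>\<^sup>2 \<ge> 2 * lam\<^sup>2" using s by simp
  have l2: "2 * lam\<^sup>2 > 0" using lam by simp
  have "cmod (complex_of_real (b \<xi> / (4 * lam\<^sup>2 - \<xi>\<^sup>2))) = b \<xi> / (4 * lam\<^sup>2 - \<xi>\<^sup>2)"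
  proof -
    have d: "4 * lam\<^sup>2 - \<xi>\<^sup>2 > 0" using pos l2 by linarith
    have nn: "b \<xi> / (4 * lam\<^sup>2 - \<xi>\<^sup>2) \<ge> 0" using hb d by (intro divide_nonneg_pos) auto
    show ?thesis by (simp only: norm_of_real abs_of_nonneg[OF nn])
  qed
  also have "\<dots> \<le> 1 / (2 * lam\<^sup>2)" using hb pos l2 by (intro frac_le) auto
  finally show ?thesis .
qed

lemma fac_Wt: "cmod (\<i> * complex_of_real (\<xi> * b \<xi>) / complex_of_real (4 * lam\<^sup>2 - \<xi>\<^sup>2)) \<le> 1 / lam"
proof (cases "b \<xi> = 0")
  case True then show ?thesis using lam by simp
next
  case False
  have s: "\<xi>\<^sup>2 < 2 * lam\<^sup>2" by (rule b_supp[OF False])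
  have pos: "4 * lam\<^sup>2 - \<xi>\<^sup>2 \<ge> 2 * lam\<^sup>2" using s by simp
  have l2: "2 * lam\<^sup>2 > 0" using lam by simp
  have xi: "\<bar>\<xi>\<bar> \<le> 2 * lam"
  proof -
    have e1: "\<bar>\<xi>\<bar>\<^sup>2 = \<xi>\<^sup>2" by simp
    have e2: "(2 * lam)\<^sup>2 = 4 * lam\<^sup>2" by (simp add: power_mult_distrib)
    have "\<bar>\<xi>\<bar>\<^sup>2 \<le> (2 * lam)\<^sup>2" unfolding e1 e2 using s zero_le_power2[of lam] by linarith
    moreover have "0 \<le> 2 * lam" using lam by simp
    ultimately show ?thesis by (rule power2_le_imp_le)
  qed
  have "cmod (\<i> * complex_of_real (\<xi> * b \<xi>) / complex_of_real (4 * lam\<^sup>2 - \<xi>\<^sup>2)) = \<bar>\<xi>\<bar> * b \<xi> / (4 * lam\<^sup>2 - \<xi>\<^sup>2)"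
  proof -
    have d: "4 * lam\<^sup>2 - \<xi>\<^sup>2 > 0" using pos l2 by linarith
    have bn: "b \<xi> \<ge> 0" using hb by blast
    show ?thesis by (simp only: norm_divide norm_mult norm_ii norm_of_real abs_mult abs_of_nonneg[OF bn] abs_of_pos[OF d] mult_1_left)
  qed
  also have "\<dots> \<le> (2 * lam) * 1 / (2 * lam\<^sup>2)"
  proof (rule frac_le)
    show "\<bar>\<xi>\<bar> * b \<xi> \<le> 2 * lam * 1" using hb xi by (intro mult_mono) auto
  qed (use lam l2 pos in auto)
  also have "\<dots> = 1 / lam" using lam by (simp add: power2_eq_square)
  finally show ?thesis .
qed

lemma W_props:
  assumes fm: "f \<in> borel_measurable borel" and a: "a \<ge> 0"
  shows "W_b b lam f \<in> borel_measurable borel"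
    and "\<forall>x. \<bar>x\<bar> > 2 * lam \<longrightarrow> W_b b lam f x = 0"
    and "cmod (W_b b lam f x - W_b b lam g x) \<le> cmod (f x - g x) / (2 * lam\<^sup>2)"
    and "cmod (W_b b lam f x) \<le> cmod (f x) / (2 * lam\<^sup>2)"
proof -
  show "W_b b lam f \<in> borel_measurable borel" unfolding W_b_def using fm bm by measurable
  show "\<forall>x. \<bar>x\<bar> > 2 * lam \<longrightarrow> W_b b lam f x = 0" unfolding W_b_def using b_supp2 by simp
  have e: "W_b b lam f x - W_b b lam g x = (f x - g x) * complex_of_real (b x / (4 * lam\<^sup>2 - x\<^sup>2))"
    unfolding W_b_def by (simp only: left_diff_distrib)
  show "cmod (W_b b lam f x - W_b b lam g x) \<le> cmod (f x - g x) / (2 * lam\<^sup>2)"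
    unfolding e norm_mult using mult_left_mono[OF fac_W[of x] norm_ge_zero[of "f x - g x"]] by simp
  show "cmod (W_b b lam f x) \<le> cmod (f x) / (2 * lam\<^sup>2)"
    unfolding W_b_def norm_mult using mult_left_mono[OF fac_W[of x] norm_ge_zero[of "f x"]] by simp
qed

lemma Wt_props:
  assumes fm: "f \<in> borel_measurable borel" and a: "a \<ge> 0"
  shows "Wt_b b lam f \<in> borel_measurable borel"
    and "\<forall>x. \<bar>x\<bar> > 2 * lam \<longrightarrow> Wt_b b lam f x = 0"
    and "cmod (Wt_b b lam f x - Wt_b b lam g x) \<le> cmod (f x - g x) / lam"
    and "cmod (Wt_b b lam f x) \<le> cmod (f x) / lam"
proof -
  show "Wt_b b lam f \<in> borel_measurable borel" unfolding Wt_b_def using fm bm by measurable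
  show "\<forall>x. \<bar>x\<bar> > 2 * lam \<longrightarrow> Wt_b b lam f x = 0" unfolding Wt_b_def using b_supp2 by simp
  have e: "Wt_b b lam f x - Wt_b b lam g x = (f x - g x) * (\<i> * complex_of_real (x * b x) / complex_of_real (4 * lam\<^sup>2 - x\<^sup>2))"
    unfolding Wt_b_def by (simp only: left_diff_distrib)
  show "cmod (Wt_b b lam f x - Wt_b b lam g x) \<le> cmod (f x - g x) / lam"
    unfolding e norm_mult using mult_left_mono[OF fac_Wt[of x] norm_ge_zero[of "f x - g x"]] by simp
  show "cmod (Wt_b b lam f x) \<le> cmod (f x) / lam"
    unfolding Wt_b_def norm_mult using mult_left_mono[OF fac_Wt[of x] norm_ge_zero[of "f x"]] by simp
qed

end


lemma tail_bound:
  fixes d :: "nat \<Rightarrow> complex"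
  assumes db: "\<forall>n. cmod (d n) \<le> C * q ^ n" and q: "0 \<le> q" "q < 1"
  shows "summable d \<and> cmod ((\<Sum>k<n. d k) - suminf d) \<le> C * q ^ n / (1 - q)"
proof -
  have sg: "summable (\<lambda>k. C * q ^ k)" using q by (intro summable_mult summable_geometric) simp
  have sn: "summable (\<lambda>k. norm (d k))"
    by (rule summable_comparison_test[OF _ sg]) (use db in auto)
  have sd: "summable d" by (rule summable_norm_cancel[OF sn])
  have "suminf d = (\<Sum>k. d (k + n)) + (\<Sum>k<n. d k)" by (rule suminf_split_initial_segment[OF sd])
  then have e: "(\<Sum>k<n. d k) - suminf d = - (\<Sum>k. d (k + n))" by simp
  have sn2: "summable (\<lambda>k. norm (d (k + n)))" using summable_ignore_initial_segment[OF sn, of n] by simp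
  have sg2: "summable (\<lambda>k. C * q ^ n * q ^ k)" using q by (intro summable_mult summable_geometric) simp
  have "cmod ((\<Sum>k<n. d k) - suminf d) = cmod (\<Sum>k. d (k + n))" unfolding e by simp
  also have "\<dots> \<le> (\<Sum>k. norm (d (k + n)))" by (rule summable_norm[OF sn2])
  also have "\<dots> \<le> (\<Sum>k. C * q ^ n * q ^ k)"
  proof (rule suminf_le[OF _ sn2 sg2])
    fix k
    have "norm (d (k + n)) \<le> C * q ^ (k + n)" using db by blast
    also have "\<dots> = C * q ^ n * q ^ k" by (simp add: power_add)
    finally show "norm (d (k + n)) \<le> C * q ^ n * q ^ k" .
  qed
  also have "\<dots> = C * q ^ n / (1 - q)"
    using q by (simp add: suminf_mult suminf_geometric divide_simps)
  finally show ?thesis using sd by blast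
qed

context
  fixes lam a \<Gamma> :: real and b :: "real \<Rightarrow> real" and v :: "real \<Rightarrow> complex"
  assumes lam: "lam > 0" and a: "a > 0" and G: "\<Gamma> \<ge> 0" and lG: "6 * \<Gamma> \<le> lam"
    and bm: "b \<in> borel_measurable borel"
    and hb: "\<forall>\<xi>. 0 \<le> b \<xi> \<and> b \<xi> \<le> 1"
    and hs: "\<forall>\<xi>. \<bar>\<xi>\<bar> \<ge> sqrt 2 * lam \<longrightarrow> b \<xi> = 0"
    and vm: "v \<in> borel_measurable borel" and vb: "\<forall>x. cmod (v x) \<le> \<Gamma> * wt a x"
begin

lemma P_bound: "2 * \<Gamma> / (lam * pi) \<le> 1/9" "0 \<le> 2 * \<Gamma> / (lam * pi)"
proof -
  have "2 * \<Gamma> * 9 \<le> lam * 3" using lG by simp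
  also have "\<dots> \<le> lam * pi" using pi_gt3 lam by (intro mult_left_mono) auto
  finally show "2 * \<Gamma> / (lam * pi) \<le> 1/9" using lam by (simp add: field_simps)
  show "0 \<le> 2 * \<Gamma> / (lam * pi)" using lam G by simp
qed

lemma R_S:
  assumes fm: "f \<in> borel_measurable borel" and fb: "\<forall>x. cmod (f x) \<le> 2 * \<Gamma> * wt a x"
  shows "R_map b lam v f \<in> borel_measurable borel \<and> (\<forall>x. cmod (R_map b lam v f x) \<le> 2 * \<Gamma> * wt a x)"
proof -
  define M where "M = 2 * \<Gamma>"
  have M0: "M \<ge> 0" using G by (simp add: M_def)
  have a0: "a \<ge> 0" using a by simp
  have L0: "2 * lam \<ge> 0" using lam by simp
  note Wt = Wt_props[OF lam bm hb hs fm a0] and W = W_props[OF lam bm hb hs fm a0]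
  have Wtb: "\<forall>x. cmod (Wt_b b lam f x) \<le> (M / lam) * wt a x"
  proof
    fix x
    have "cmod (Wt_b b lam f x) \<le> cmod (f x) / lam" by (rule Wt(4))
    also have "\<dots> \<le> M * wt a x / lam" using fb lam by (intro divide_right_mono) (auto simp: M_def)
    finally show "cmod (Wt_b b lam f x) \<le> (M / lam) * wt a x" by simp
  qed
  have Wb: "\<forall>x. cmod (W_b b lam f x) \<le> (M / (2 * lam\<^sup>2)) * wt a x"
  proof
    fix x
    have "cmod (W_b b lam f x) \<le> cmod (f x) / (2 * lam\<^sup>2)" by (rule W(4))
    also have "\<dots> \<le> M * wt a x / (2 * lam\<^sup>2)" using fb lam by (intro divide_right_mono) (auto simp: M_def)
    finally show "cmod (W_b b lam f x) \<le> (M / (2 * lam\<^sup>2)) * wt a x" by simp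
  qed
  have A0: "M / lam \<ge> 0" "M / (2 * lam\<^sup>2) \<ge> 0" using M0 lam by auto
  have teq: "M / (2 * lam\<^sup>2) * (2 * lam) / pi = 2 * \<Gamma> / (lam * pi)"
    using lam by (simp add: M_def power2_eq_square field_simps)
  have t: "M / (2 * lam\<^sup>2) * (2 * lam) / pi \<le> 1/2" unfolding teq using P_bound by simp
  have c1: "cmod (conv (Wt_b b lam f) (Wt_b b lam f) x) \<le> (M / lam) * (M / lam) * (2 * lam / pi) * wt a x" for x
    by (rule conv_bound[OF a0 L0 Wt(1) Wt(1) Wtb Wtb Wt(2) A0(1) A0(1)])
  note e2 = exp2_bound[OF a0 L0 A0(2) W(1) Wb W(2) t]
  let ?P = "2 * \<Gamma> / (lam * pi)"
  have k1: "(M / lam) * (M / lam) * (2 * lam / pi) = 2 * M * ?P"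
    using lam by (simp add: M_def power2_eq_square field_simps)
  have k2: "M / (2 * lam\<^sup>2) * (M / (2 * lam\<^sup>2) * (2 * lam) / pi) = M * ?P / (2 * lam\<^sup>2)"
    using lam by (simp add: M_def power2_eq_square field_simps)
  have Rm: "R_map b lam v f \<in> borel_measurable borel"
  proof -
    have [measurable]: "conv (Wt_b b lam f) (Wt_b b lam f) \<in> borel_measurable borel"
      by (rule conv_meas[OF Wt(1) Wt(1)])
    have [measurable]: "exp2_star (W_b b lam f) \<in> borel_measurable borel" using e2 by blast
    show ?thesis unfolding R_map_def using vm by measurable
  qed
  have "cmod (R_map b lam v f x) \<le> 2 * \<Gamma> * wt a x" for x
  proof -
    have "cmod (R_map b lam v f x) \<le> cmod ((1/4) * conv (Wt_b b lam f) (Wt_b b lam f) x)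
        + cmod (complex_of_real (4 * lam\<^sup>2) * exp2_star (W_b b lam f) x) + cmod (v x)"
      unfolding R_map_def by (rule order_trans[OF norm_triangle_ineq add_right_mono[OF norm_triangle_ineq4]])
    also have "\<dots> = (1/4) * cmod (conv (Wt_b b lam f) (Wt_b b lam f) x)
        + (4 * lam\<^sup>2) * cmod (exp2_star (W_b b lam f) x) + cmod (v x)"
      by (simp add: norm_mult norm_power)
    also have "\<dots> \<le> (1/4) * ((M / lam) * (M / lam) * (2 * lam / pi) * wt a x)
        + (4 * lam\<^sup>2) * (M / (2 * lam\<^sup>2) * (M / (2 * lam\<^sup>2) * (2 * lam) / pi) * wt a x) + \<Gamma> * wt a x"
      using c1[of x] e2 vb by (intro add_mono mult_left_mono) auto
    also have "\<dots> = (5/2 * M * ?P + \<Gamma>) * wt a x"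
      unfolding k1 k2 using lam by (simp add: field_simps)
    also have "\<dots> \<le> (5/2 * M * (1/9) + \<Gamma>) * wt a x"
      using P_bound M0 by (intro mult_right_mono add_right_mono mult_left_mono) auto
    also have "\<dots> \<le> 2 * \<Gamma> * wt a x"
      using G by (intro mult_right_mono) (auto simp: M_def)
    finally show ?thesis .
  qed
  with Rm show ?thesis by blast
qed


lemma Wt_bnd:
  assumes fm: "f \<in> borel_measurable borel" and fb: "\<forall>x. cmod (f x) \<le> K * wt a x"
  shows "\<forall>x. cmod (Wt_b b lam f x) \<le> (K / lam) * wt a x"
proof
  fix x
  have a0: "a \<ge> 0" using a by simp
  have "cmod (Wt_b b lam f x) \<le> cmod (f x) / lam" by (rule Wt_props(4)[OF lam bm hb hs fm a0])
  also have "\<dots> \<le> K * wt a x / lam" using fb lam by (intro divide_right_mono) auto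
  finally show "cmod (Wt_b b lam f x) \<le> (K / lam) * wt a x" by simp
qed

lemma W_bnd:
  assumes fm: "f \<in> borel_measurable borel" and fb: "\<forall>x. cmod (f x) \<le> K * wt a x"
  shows "\<forall>x. cmod (W_b b lam f x) \<le> (K / (2 * lam\<^sup>2)) * wt a x"
proof
  fix x
  have a0: "a \<ge> 0" using a by simp
  have "cmod (W_b b lam f x) \<le> cmod (f x) / (2 * lam\<^sup>2)" by (rule W_props(4)[OF lam bm hb hs fm a0])
  also have "\<dots> \<le> K * wt a x / (2 * lam\<^sup>2)" using fb lam by (intro divide_right_mono) auto
  finally show "cmod (W_b b lam f x) \<le> (K / (2 * lam\<^sup>2)) * wt a x" by simp
qed

lemma Wt_dif:
  assumes fm: "f \<in> borel_measurable borel" and fg: "\<forall>x. cmod (f x - g x) \<le> K * wt a x"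
  shows "\<forall>x. cmod (Wt_b b lam f x - Wt_b b lam g x) \<le> (K / lam) * wt a x"
proof
  fix x
  have a0: "a \<ge> 0" using a by simp
  have "cmod (Wt_b b lam f x - Wt_b b lam g x) \<le> cmod (f x - g x) / lam" by (rule Wt_props(3)[OF lam bm hb hs fm a0])
  also have "\<dots> \<le> K * wt a x / lam" using fg lam by (intro divide_right_mono) auto
  finally show "cmod (Wt_b b lam f x - Wt_b b lam g x) \<le> (K / lam) * wt a x" by simp
qed

lemma W_dif:
  assumes fm: "f \<in> borel_measurable borel" and fg: "\<forall>x. cmod (f x - g x) \<le> K * wt a x"
  shows "\<forall>x. cmod (W_b b lam f x - W_b b lam g x) \<le> (K / (2 * lam\<^sup>2)) * wt a x"
proof
  fix x
  have a0: "a \<ge> 0" using a by simp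
  have "cmod (W_b b lam f x - W_b b lam g x) \<le> cmod (f x - g x) / (2 * lam\<^sup>2)" by (rule W_props(3)[OF lam bm hb hs fm a0])
  also have "\<dots> \<le> K * wt a x / (2 * lam\<^sup>2)" using fg lam by (intro divide_right_mono) auto
  finally show "cmod (W_b b lam f x - W_b b lam g x) \<le> (K / (2 * lam\<^sup>2)) * wt a x" by simp
qed

lemma R_contr:
  assumes fm: "f \<in> borel_measurable borel" and fb: "\<forall>x. cmod (f x) \<le> 2 * \<Gamma> * wt a x"
    and gm: "g \<in> borel_measurable borel" and gb: "\<forall>x. cmod (g x) \<le> 2 * \<Gamma> * wt a x"
    and d0: "\<delta> \<ge> 0" and fg: "\<forall>x. cmod (f x - g x) \<le> \<delta> * wt a x"
  shows "cmod (R_map b lam v f x - R_map b lam v g x) \<le> (5/9) * \<delta> * wt a x"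
proof -
  define M where "M = 2 * \<Gamma>"
  have M0: "M \<ge> 0" using G by (simp add: M_def)
  have a0: "a \<ge> 0" using a by simp
  have L0: "2 * lam \<ge> 0" using lam by simp
  note Wtf = Wt_props[OF lam bm hb hs fm a0] and Wf = W_props[OF lam bm hb hs fm a0]
  note Wtg = Wt_props[OF lam bm hb hs gm a0] and Wg = W_props[OF lam bm hb hs gm a0]
  have A0: "M / lam \<ge> 0" "M / (2 * lam\<^sup>2) \<ge> 0" "\<delta> / lam \<ge> 0" "\<delta> / (2 * lam\<^sup>2) \<ge> 0"
    using M0 lam d0 by auto
  let ?P = "2 * \<Gamma> / (lam * pi)"
  have teq: "M / (2 * lam\<^sup>2) * (2 * lam) / pi = ?P"
    using lam by (simp add: M_def power2_eq_square field_simps)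
  have t: "M / (2 * lam\<^sup>2) * (2 * lam) / pi \<le> 1/2" unfolding teq using P_bound by simp
  have c1: "cmod (conv (Wt_b b lam f) (Wt_b b lam f) x - conv (Wt_b b lam g) (Wt_b b lam g) x)
     \<le> (\<delta> / lam * (M / lam) + M / lam * (\<delta> / lam)) * (2 * lam / pi) * wt a x"
    by (rule conv_diff_bound[OF a0 L0 Wtf(1) Wtg(1) Wtf(1) Wtg(1)
          Wt_bnd[OF fm fb[folded M_def]] Wt_bnd[OF gm gb[folded M_def]]
          Wt_bnd[OF fm fb[folded M_def]] Wt_bnd[OF gm gb[folded M_def]] Wtf(2) Wtg(2)
          Wt_dif[OF fm fg] Wt_dif[OF fm fg] A0(1) A0(1) A0(1) A0(1) A0(3) A0(3)])
  have c2: "cmod (exp2_star (W_b b lam f) x - exp2_star (W_b b lam g) x)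
     \<le> 2 * (\<delta> / (2 * lam\<^sup>2)) * (M / (2 * lam\<^sup>2) * (2 * lam) / pi) * wt a x"
    by (rule exp2_diff[OF a0 L0 A0(2) A0(4) Wf(1) W_bnd[OF fm fb[folded M_def]] Wf(2)
          Wg(1) W_bnd[OF gm gb[folded M_def]] Wg(2) W_dif[OF fm fg] t])
  have k1: "(\<delta> / lam * (M / lam) + M / lam * (\<delta> / lam)) * (2 * lam / pi) = 4 * \<delta> * ?P"
    using lam by (simp add: M_def power2_eq_square field_simps)
  have k2: "2 * (\<delta> / (2 * lam\<^sup>2)) * (M / (2 * lam\<^sup>2) * (2 * lam) / pi) = \<delta> * ?P / lam\<^sup>2"
    using lam by (simp add: M_def power2_eq_square field_simps)
  have e: "R_map b lam v f x - R_map b lam v g x =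
     (1/4) * (conv (Wt_b b lam f) (Wt_b b lam f) x - conv (Wt_b b lam g) (Wt_b b lam g) x)
     - complex_of_real (4 * lam\<^sup>2) * (exp2_star (W_b b lam f) x - exp2_star (W_b b lam g) x)"
    unfolding R_map_def by (simp add: algebra_simps)
  have "cmod (R_map b lam v f x - R_map b lam v g x) \<le>
      cmod ((1/4) * (conv (Wt_b b lam f) (Wt_b b lam f) x - conv (Wt_b b lam g) (Wt_b b lam g) x))
      + cmod (complex_of_real (4 * lam\<^sup>2) * (exp2_star (W_b b lam f) x - exp2_star (W_b b lam g) x))"
    unfolding e by (rule norm_triangle_ineq4)
  also have "\<dots> = (1/4) * cmod (conv (Wt_b b lam f) (Wt_b b lam f) x - conv (Wt_b b lam g) (Wt_b b lam g) x)
      + (4 * lam\<^sup>2) * cmod (exp2_star (W_b b lam f) x - exp2_star (W_b b lam g) x)"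
    by (simp add: norm_mult norm_power)
  also have "\<dots> \<le> (1/4) * (4 * \<delta> * ?P * wt a x) + (4 * lam\<^sup>2) * (\<delta> * ?P / lam\<^sup>2 * wt a x)"
    using c1 c2 unfolding k1 k2 by (intro add_mono mult_left_mono) auto
  also have "\<dots> = 5 * \<delta> * ?P * wt a x" using lam by (simp add: field_simps)
  also have "\<dots> \<le> 5 * \<delta> * (1/9) * wt a x"
    using P_bound d0 by (intro mult_right_mono mult_left_mono) auto
  finally show ?thesis by simp
qed


lemma main_iter:
  "\<exists>\<psi> :: real \<Rightarrow> complex. integrable lborel \<psi>
     \<and> (\<forall>\<xi>. \<psi> \<xi> = R_map b lam v \<psi> \<xi>)
     \<and> ((\<lambda>n. LINT \<xi>|lborel. cmod (((R_map b lam v) ^^ n) v \<xi> - \<psi> \<xi>)) \<longlonglongrightarrow> 0)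
     \<and> (\<forall>\<xi>. cmod (\<psi> \<xi>) \<le> 2 * \<Gamma> * wt a \<xi>)"
proof -
  define R where "R = R_map b lam v"
  define x where "x n = (R ^^ n) v" for n
  define q :: real where "q = 5/9"
  have q: "0 \<le> q" "q < 1" by (auto simp: q_def)
  have S: "x n \<in> borel_measurable borel \<and> (\<forall>\<xi>. cmod (x n \<xi>) \<le> 2 * \<Gamma> * wt a \<xi>)" for n
  proof (induction n)
    case 0
    have "cmod (v \<xi>) \<le> 2 * \<Gamma> * wt a \<xi>" for \<xi>
      using vb[rule_format, of \<xi>] G wt_nn[of a \<xi>] by (smt (verit) mult_right_mono)
    then show ?case using vm by (simp add: x_def)
  next
    case (Suc n)
    then show ?case using R_S[of "x n"] by (simp add: x_def R_def)
  qed
  have xS: "x (Suc n) = R (x n)" for n by (simp add: x_def)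
  have D: "\<forall>\<xi>. cmod (x (Suc n) \<xi> - x n \<xi>) \<le> (4 * \<Gamma> * q ^ n) * wt a \<xi>" for n
  proof (induction n)
    case 0
    show ?case
    proof
      fix \<xi>
      have "cmod (x 1 \<xi> - x 0 \<xi>) \<le> cmod (x 1 \<xi>) + cmod (x 0 \<xi>)" by (rule norm_triangle_ineq4)
      also have "\<dots> \<le> 2 * \<Gamma> * wt a \<xi> + 2 * \<Gamma> * wt a \<xi>" using S[of 1] S[of 0] by (intro add_mono) auto
      finally show "cmod (x (Suc 0) \<xi> - x 0 \<xi>) \<le> (4 * \<Gamma> * q ^ 0) * wt a \<xi>" by simp
    qed
  next
    case (Suc n)
    have d0: "4 * \<Gamma> * q ^ n \<ge> 0" using G q by simp
    show ?case
    proof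
      fix \<xi>
      have "cmod (R (x (Suc n)) \<xi> - R (x n) \<xi>) \<le> (5/9) * (4 * \<Gamma> * q ^ n) * wt a \<xi>"
        unfolding R_def using S[of "Suc n"] S[of n] Suc d0 by (intro R_contr) auto
      then show "cmod (x (Suc (Suc n)) \<xi> - x (Suc n) \<xi>) \<le> (4 * \<Gamma> * q ^ Suc n) * wt a \<xi>"
        unfolding xS[of "Suc n"] xS[of n] by (simp add: q_def mult_ac)
    qed
  qed
  define d where "d \<xi> n = x (Suc n) \<xi> - x n \<xi>" for \<xi> n
  define \<psi> where "\<psi> \<xi> = v \<xi> + suminf (d \<xi>)" for \<xi>
  have db: "\<forall>n. cmod (d \<xi> n) \<le> (4 * \<Gamma> * wt a \<xi>) * q ^ n" for \<xi>
    using D unfolding d_def by (simp add: mult_ac)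
  have tel: "x n \<xi> = v \<xi> + (\<Sum>k<n. d \<xi> k)" for n \<xi>
    unfolding d_def using sum_lessThan_telescope[of "\<lambda>k. x k \<xi>" n] by (simp add: x_def)
  have K: "cmod (x n \<xi> - \<psi> \<xi>) \<le> (9 * \<Gamma>) * q ^ n * wt a \<xi>" for n \<xi>
  proof -
    have "cmod (x n \<xi> - \<psi> \<xi>) = cmod ((\<Sum>k<n. d \<xi> k) - suminf (d \<xi>))"
      unfolding tel \<psi>_def by simp
    also have "\<dots> \<le> (4 * \<Gamma> * wt a \<xi>) * q ^ n / (1 - q)" using tail_bound[OF db q] by blast
    also have "\<dots> = (9 * \<Gamma>) * q ^ n * wt a \<xi>" by (simp add: q_def field_simps)
    finally show ?thesis .
  qed
  have qz: "(\<lambda>n. C * q ^ n) \<longlonglongrightarrow> 0" for C :: real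
    using q by (intro tendsto_mult_right_zero LIMSEQ_power_zero) auto
  have conv_pt: "(\<lambda>n. x n \<xi>) \<longlonglongrightarrow> \<psi> \<xi>" for \<xi>
  proof (rule LIM_zero_cancel, rule Lim_null_comparison)
    show "\<forall>\<^sub>F n in sequentially. cmod (x n \<xi> - \<psi> \<xi>) \<le> (9 * \<Gamma> * wt a \<xi>) * q ^ n"
      using K by (simp add: mult_ac)
    show "(\<lambda>n. (9 * \<Gamma> * wt a \<xi>) * q ^ n) \<longlonglongrightarrow> 0" by (rule qz)
  qed
  have \<psi>m: "\<psi> \<in> borel_measurable borel"
    by (rule borel_measurable_LIMSEQ_metric[of x]) (use S conv_pt in auto)
  have \<psi>b: "cmod (\<psi> \<xi>) \<le> 2 * \<Gamma> * wt a \<xi>" for \<xi>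
  proof (rule tendsto_le[OF trivial_limit_sequentially _ tendsto_norm[OF conv_pt[of \<xi>]]])
    show "(\<lambda>n. 2 * \<Gamma> * wt a \<xi>) \<longlonglongrightarrow> 2 * \<Gamma> * wt a \<xi>" by simp
    show "\<forall>\<^sub>F n in sequentially. cmod (x n \<xi>) \<le> 2 * \<Gamma> * wt a \<xi>" using S by simp
  qed
  have iw: "integrable lborel (\<lambda>\<xi>. C * wt a \<xi>)" for C
    using integrable_w[OF a] unfolding wt_def[symmetric] by simp
  have \<psi>i: "integrable lborel \<psi>"
  proof (rule Bochner_Integration.integrable_bound[OF iw[of "2 * \<Gamma>"]])
    show "\<psi> \<in> borel_measurable lborel" using \<psi>m by simp
    show "AE \<xi> in lborel. norm (\<psi> \<xi>) \<le> norm (2 * \<Gamma> * wt a \<xi>)"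
      by (rule AE_I2) (metis abs_ge_self order_trans \<psi>b real_norm_def)
  qed
  have di: "integrable lborel (\<lambda>\<xi>. cmod (x n \<xi> - \<psi> \<xi>))" for n
  proof (rule Bochner_Integration.integrable_bound[OF iw[of "9 * \<Gamma> * q ^ n"]])
    have [measurable]: "x n \<in> borel_measurable borel" using S[of n] by blast
    have [measurable]: "\<psi> \<in> borel_measurable borel" by (rule \<psi>m)
    show "(\<lambda>\<xi>. cmod (x n \<xi> - \<psi> \<xi>)) \<in> borel_measurable lborel" by simp
    show "AE \<xi> in lborel. norm (cmod (x n \<xi> - \<psi> \<xi>)) \<le> norm (9 * \<Gamma> * q ^ n * wt a \<xi>)"
      using K G q by auto
  qed
  have L1: "(\<lambda>n. LINT \<xi>|lborel. cmod (x n \<xi> - \<psi> \<xi>)) \<longlonglongrightarrow> 0"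
  proof (rule tendsto_sandwich[of "\<lambda>_. 0" _ _ "\<lambda>n. (9 * \<Gamma> * (LINT \<xi>|lborel. wt a \<xi>)) * q ^ n"])
    show "\<forall>\<^sub>F n in sequentially. 0 \<le> (LINT \<xi>|lborel. cmod (x n \<xi> - \<psi> \<xi>))" by simp
    show "\<forall>\<^sub>F n in sequentially. (LINT \<xi>|lborel. cmod (x n \<xi> - \<psi> \<xi>)) \<le> (9 * \<Gamma> * (LINT \<xi>|lborel. wt a \<xi>)) * q ^ n"
    proof (rule always_eventually, rule allI)
      fix n
      have "(LINT \<xi>|lborel. cmod (x n \<xi> - \<psi> \<xi>)) \<le> (LINT \<xi>|lborel. 9 * \<Gamma> * q ^ n * wt a \<xi>)"
        by (rule Bochner_Integration.integral_mono[OF di iw]) (use K in auto)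
      also have "\<dots> = (9 * \<Gamma> * (LINT \<xi>|lborel. wt a \<xi>)) * q ^ n" by (simp add: mult_ac)
      finally show "(LINT \<xi>|lborel. cmod (x n \<xi> - \<psi> \<xi>)) \<le> (9 * \<Gamma> * (LINT \<xi>|lborel. wt a \<xi>)) * q ^ n" .
    qed
  qed (auto intro: qz)
  have fixpt: "\<psi> \<xi> = R \<psi> \<xi>" for \<xi>
  proof -
    have "(\<lambda>n. x (Suc n) \<xi>) \<longlonglongrightarrow> R \<psi> \<xi>"
    proof (rule LIM_zero_cancel, rule Lim_null_comparison)
      show "\<forall>\<^sub>F n in sequentially. cmod (x (Suc n) \<xi> - R \<psi> \<xi>) \<le> ((5/9) * 9 * \<Gamma> * wt a \<xi>) * q ^ n"
      proof (rule always_eventually, rule allI)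
        fix n
        have d0: "9 * \<Gamma> * q ^ n \<ge> 0" using G q by simp
        have "cmod (R \<psi> \<xi> - R (x n) \<xi>) \<le> (5/9) * (9 * \<Gamma> * q ^ n) * wt a \<xi>"
          unfolding R_def
        proof (rule R_contr[OF \<psi>m _ _ _ d0])
          show "\<forall>x. cmod (\<psi> x) \<le> 2 * \<Gamma> * wt a x" using \<psi>b by blast
          show "x n \<in> borel_measurable borel" "\<forall>\<xi>. cmod (x n \<xi>) \<le> 2 * \<Gamma> * wt a \<xi>" using S by auto
          show "\<forall>y. cmod (\<psi> y - x n y) \<le> 9 * \<Gamma> * q ^ n * wt a y" using K by (simp add: norm_minus_commute)
        qed
        then show "cmod (x (Suc n) \<xi> - R \<psi> \<xi>) \<le> ((5/9) * 9 * \<Gamma> * wt a \<xi>) * q ^ n"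
          unfolding xS by (simp add: norm_minus_commute mult_ac)
      qed
      show "(\<lambda>n. ((5/9) * 9 * \<Gamma> * wt a \<xi>) * q ^ n) \<longlonglongrightarrow> 0" by (rule qz)
    qed
    moreover have "(\<lambda>n. x (Suc n) \<xi>) \<longlonglongrightarrow> \<psi> \<xi>" using conv_pt LIMSEQ_Suc by blast
    ultimately show ?thesis using LIMSEQ_unique by metis
  qed
  show ?thesis
    by (rule exI[of _ \<psi>]) (use \<psi>i fixpt L1 \<psi>b in \<open>auto simp: R_def x_def\<close>)
qed

end

theorem theorem7p5:
  fixes lam a \<Gamma> :: real and b :: "real \<Rightarrow> real" and v :: "real \<Rightarrow> complex"
  assumes "lam > 0" and "a > 0" and "\<Gamma> \<ge> 0"
    and "lam \<ge> 6 * max \<Gamma> (1 / a)"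
    and "smooth_fun b" and "\<forall>\<xi>. 0 \<le> b \<xi> \<and> b \<xi> \<le> 1"
    and "\<forall>\<xi>. \<bar>\<xi>\<bar> \<le> lam \<longrightarrow> b \<xi> = 1"
    and "\<forall>\<xi>. \<bar>\<xi>\<bar> \<ge> sqrt 2 * lam \<longrightarrow> b \<xi> = 0"
    and "integrable lborel v"
    and "\<forall>\<xi>. cmod (v \<xi>) \<le> \<Gamma> * exp (- a * \<bar>\<xi>\<bar>)"
  shows "\<exists>\<psi> :: real \<Rightarrow> complex. integrable lborel \<psi>
     \<and> (AE \<xi> in lborel. \<psi> \<xi> = R_map b lam v \<psi> \<xi>)
     \<and> ((\<lambda>n. LINT \<xi>|lborel. cmod (((R_map b lam v) ^^ n) v \<xi> - \<psi> \<xi>)) \<longlonglongrightarrow> 0)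
     \<and> (\<forall>\<xi>. cmod (\<psi> \<xi>) \<le> 2 * \<Gamma> * exp (- (a - 1 / lam) * \<bar>\<xi>\<bar>))"
proof -
  note lam = assms(1) and a = assms(2) and G = assms(3)
  obtain D :: "nat \<Rightarrow> real \<Rightarrow> real" where D0: "D 0 = b"
    and der: "\<forall>n x. (D n has_real_derivative D (Suc n) x) (at x)"
    using assms(5) unfolding smooth_fun_def by blast
  have "isCont b x" for x using DERIV_isCont der D0 by metis
  then have "continuous_on UNIV b" by (simp add: continuous_at_imp_continuous_on)
  then have bm: "b \<in> borel_measurable borel" by (rule borel_measurable_continuous_onI)
  have lG: "6 * \<Gamma> \<le> lam" using assms(4) by (simp add: max_def split: if_splits)
  have "v \<in> borel_measurable lborel" using assms(9) by (rule borel_measurable_integrable)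
  then have vm: "v \<in> borel_measurable borel" by simp
  have vb: "\<forall>x. cmod (v x) \<le> \<Gamma> * wt a x" using assms(10) by (simp add: wt_def)
  obtain \<psi> where i: "integrable lborel \<psi>" and fp: "\<forall>\<xi>. \<psi> \<xi> = R_map b lam v \<psi> \<xi>"
    and L: "(\<lambda>n. LINT \<xi>|lborel. cmod (((R_map b lam v) ^^ n) v \<xi> - \<psi> \<xi>)) \<longlonglongrightarrow> 0"
    and pb: "\<forall>\<xi>. cmod (\<psi> \<xi>) \<le> 2 * \<Gamma> * wt a \<xi>"
    using main_iter[OF lam a G lG bm assms(6) assms(8) vm vb] by blast
  have "cmod (\<psi> \<xi>) \<le> 2 * \<Gamma> * exp (- (a - 1 / lam) * \<bar>\<xi>\<bar>)" for \<xi>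
  proof -
    have "wt a \<xi> \<le> exp (- (a - 1 / lam) * \<bar>\<xi>\<bar>)"
      unfolding wt_def using lam by (auto simp: algebra_simps)
    then have "2 * \<Gamma> * wt a \<xi> \<le> 2 * \<Gamma> * exp (- (a - 1 / lam) * \<bar>\<xi>\<bar>)"
      using G by (intro mult_left_mono) auto
    then show ?thesis using pb by (meson order_trans)
  qed
  then show ?thesis using i fp L by (auto intro!: exI[of _ \<psi>])
qed

end
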